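(* Fix $M\in\mathbb{N}$, $M\ge3$, and let $\lambda(j)=j\frac{4+j^2}{1+j^2}$. Call an $n$-uple $\{j_1,\dots,j_n\}\subset\mathbb{Z}\setminus\{0\}$, with $n\le M$, an $M$-resonance of order $n$ if $$\sum_{i=1}^nj_i=0,\qquad\sum_{i=1}^n\lambda(j_i)=0,\qquad\sum_{i=1}^n(1+j_i^2)^2j_i^{2(r-2)}\lambda(j_i)=0\quad\forall r=2,\dots,M+1.$$ Then all $M$-resonances are trivial: there are no $M$-resonances of odd order, and the ones of even order are, up to permutations, of the form $(i,-i,j,-j,k,-k,p,-p,\dots)$. *)

theory Defs
  imports Complex_Main "HOL-Library.Multiset"
begin

definition lam :: "int \<Rightarrow> real" where
  "lam j = real_of_int j * (4 + (real_of_int j)^2) / (1 + (real_of_int j)^2)"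

definition M_resonance :: "nat \<Rightarrow> int list \<Rightarrow> bool" where
  "M_resonance M js \<longleftrightarrow>
     length js \<le> M \<and>
     (\<forall>j\<in>set js. j \<noteq> 0) \<and>
     sum_list js = 0 \<and>
     (\<Sum>j\<leftarrow>js. lam j) = 0 \<and>
     (\<forall>r\<in>{2..M+1}.
        (\<Sum>j\<leftarrow>js. (1 + (real_of_int j)^2)^2 * (real_of_int j)^(2*(r-2)) * lam j) = 0)"

definition trivial_resonance :: "int list \<Rightarrow> bool" where
  "trivial_resonance js \<longleftrightarrow>
     (\<exists>ks. mset js = mset (concat (map (\<lambda>k. [k, -k]) ks)))"

end

theory Submission
  imports Defs "HOL-Computational_Algebra.Polynomial"
begin

lemma sum_list_swap:
  "(\<Sum>j\<leftarrow>js. (\<Sum>i\<in>I. f i j)) = (\<Sum>i\<in>I. (\<Sum>j\<leftarrow>js. f i j :: real))"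
  by (induction js) (auto simp: sum.distrib)

lemma sum_list_cmult:
  "(\<Sum>j\<leftarrow>js. c * f j) = c * (\<Sum>j\<leftarrow>js. f j :: real)"
  by (induction js) (auto simp: algebra_simps)

lemma sum_list_count:
  fixes a :: int
  assumes anz: "a \<noteq> 0"
  shows "(\<Sum>j\<leftarrow>js. if (real_of_int j)^2 = (real_of_int a)^2 then real_of_int j else 0)
     = real_of_int a * (real (count (mset js) a) - real (count (mset js) (-a)))"
proof (induction js)
  case Nil then show ?case by simp
next
  case (Cons j js)
  have iff: "(real_of_int j)^2 = (real_of_int a)^2 \<longleftrightarrow> j = a \<or> j = -a"
  proof -
    have "(real_of_int j)^2 = (real_of_int a)^2 \<longleftrightarrow> real_of_int j = real_of_int a \<or> real_of_int j = - real_of_int a"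
      by (rule power2_eq_iff)
    also have "\<dots> \<longleftrightarrow> j = a \<or> j = -a"
      by (metis of_int_eq_iff of_int_minus)
    finally show ?thesis .
  qed
  show ?case using Cons iff anz by (auto simp: algebra_simps)
qed

lemma key_moments:
  assumes "M_resonance M js" "i < M"
  shows "(\<Sum>j\<leftarrow>js. (real_of_int j)^(2*i+1) * ((1 + (real_of_int j)^2) * (4 + (real_of_int j)^2))) = 0"
proof -
  have r: "i + 2 \<in> {2..M+1}" using assms(2) by auto
  have h: "(\<Sum>j\<leftarrow>js. (1 + (real_of_int j)^2)^2 * (real_of_int j)^(2*((i+2)-2)) * lam j) = 0"
    using assms(1) r unfolding M_resonance_def by blast
  have E: "(1 + (real_of_int j)^2)^2 * (real_of_int j)^(2*((i+2)-2)) * lam j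
       = (real_of_int j)^(2*i+1) * ((1 + (real_of_int j)^2) * (4 + (real_of_int j)^2))" for j
  proof -
    have pos: "1 + (real_of_int j)^2 \<noteq> 0"
      by (metis add_pos_nonneg zero_less_one zero_le_power2 less_irrefl)
    show "(1 + (real_of_int j)^2)^2 * (real_of_int j)^(2*((i+2)-2)) * lam j
       = (real_of_int j)^(2*i+1) * ((1 + (real_of_int j)^2) * (4 + (real_of_int j)^2))"
      using pos by (simp add: lam_def field_simps power2_eq_square)
  qed
  from h show ?thesis by (simp only: E)
qed

lemma poly_moments:
  fixes q :: "real poly"
  assumes "M_resonance M js" "degree q < M"
  shows "(\<Sum>j\<leftarrow>js. real_of_int j * ((1 + (real_of_int j)^2) * (4 + (real_of_int j)^2))
            * poly q ((real_of_int j)^2)) = 0"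
proof -
  have "(\<Sum>j\<leftarrow>js. real_of_int j * ((1 + (real_of_int j)^2) * (4 + (real_of_int j)^2))
            * poly q ((real_of_int j)^2))
     = (\<Sum>j\<leftarrow>js. (\<Sum>i\<le>degree q. coeff q i * ((real_of_int j)^(2*i+1) * ((1 + (real_of_int j)^2) * (4 + (real_of_int j)^2)))))"
  proof -
    have P: "real_of_int j * ((1 + (real_of_int j)^2) * (4 + (real_of_int j)^2))
            * poly q ((real_of_int j)^2) = (\<Sum>i\<le>degree q. coeff q i * ((real_of_int j)^(2*i+1) * ((1 + (real_of_int j)^2) * (4 + (real_of_int j)^2))))" for j
    proof -
      have pw: "((real_of_int j)^2)^i * real_of_int j = (real_of_int j)^(2*i+1)" for i
        by (simp add: power_mult)
      show ?thesis unfolding poly_altdef sum_distrib_left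
      proof (rule sum.cong)
        fix i
        have e: "(real_of_int j)^(2*i+1) = real_of_int j * ((real_of_int j)^2)^i"
          by (simp add: power_mult)
        show "real_of_int j * ((1 + (real_of_int j)^2) * (4 + (real_of_int j)^2)) * (coeff q i * ((real_of_int j)^2)^i)
          = coeff q i * ((real_of_int j)^(2*i+1) * ((1 + (real_of_int j)^2) * (4 + (real_of_int j)^2)))"
          by (subst e) (simp only: mult_ac)
      qed simp
    qed
    show ?thesis by (simp only: P)
  qed
  also have "\<dots> = (\<Sum>i\<le>degree q. coeff q i * (\<Sum>j\<leftarrow>js. (real_of_int j)^(2*i+1) * ((1 + (real_of_int j)^2) * (4 + (real_of_int j)^2))))"
    by (simp add: sum_list_swap sum_list_cmult)
  also have "\<dots> = 0"
    using key_moments[OF assms(1)] assms(2) by (intro sum.neutral) auto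
  finally show ?thesis .
qed

lemma counts_equal:
  fixes a :: int
  assumes res: "M_resonance M js"
  shows "count (mset js) a = count (mset js) (-a)"
proof (cases "a = 0")
  case True then show ?thesis by simp
next
  case anz: False
  define X where "X = (\<lambda>j. (real_of_int j)^2) ` set js"
  define x0 where "x0 = (real_of_int a)^2"
  show ?thesis
  proof (cases "x0 \<in> X")
    case False
    then have "a \<notin> set js" "-a \<notin> set js" unfolding X_def x0_def
      by (auto, metis (no_types, lifting) image_eqI of_int_minus power2_minus)
    then show ?thesis by (metis count_eq_zero_iff set_mset_mset)
  next
    case True
    have finX: "finite X" unfolding X_def by simp
    have cardX: "card X \<le> M"
    proof -
      have "card X \<le> card (set js)" unfolding X_def by (rule card_image_le) simp
      also have "\<dots> \<le> length js" by (rule card_length)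
      also have "\<dots> \<le> M" using res unfolding M_resonance_def by simp
      finally show ?thesis .
    qed
    have cpos: "card X \<ge> 1" using True finX by (metis One_nat_def Suc_leI card_gt_0_iff empty_iff)
    define q :: "real poly" where "q = (\<Prod>y\<in>X - {x0}. [:-y, 1:])"
    have "degree q \<le> (\<Sum>y\<in>X - {x0}. degree [:-y, 1:])"
      unfolding q_def using degree_prod_sum_le[of "X - {x0}" "\<lambda>y. [:-y, 1:]"] finX by (simp add: o_def)
    also have "\<dots> = card (X - {x0})" by simp
    also have "\<dots> = card X - 1" using True finX by simp
    finally have degq: "degree q < M" using cardX cpos by linarith
    have pq: "poly q x = (\<Prod>y\<in>X - {x0}. x - y)" for x
      unfolding q_def by (simp add: poly_prod)
    have q0: "poly q x0 \<noteq> 0" unfolding pq using finX by auto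
    define C0 where "C0 = (1 + x0) * (4 + x0) * poly q x0"
    have C0nz: "C0 \<noteq> 0" unfolding C0_def using q0
      by (simp add: x0_def) (smt (verit) zero_le_power2)
    have pt: "real_of_int j * ((1 + (real_of_int j)^2) * (4 + (real_of_int j)^2)) * poly q ((real_of_int j)^2)
        = C0 * (if (real_of_int j)^2 = (real_of_int a)^2 then real_of_int j else 0)"
      if "j \<in> set js" for j
    proof (cases "(real_of_int j)^2 = (real_of_int a)^2")
      case True
      then show ?thesis unfolding C0_def x0_def by simp
    next
      case False
      have "(real_of_int j)^2 \<in> X - {x0}" using that False unfolding X_def x0_def by auto
      then have "poly q ((real_of_int j)^2) = 0" unfolding pq using finX
        by (metis (no_types, lifting) finite_Diff prod_zero_iff right_minus_eq)
      then show ?thesis using False by simp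
    qed
    have "0 = (\<Sum>j\<leftarrow>js. real_of_int j * ((1 + (real_of_int j)^2) * (4 + (real_of_int j)^2))
            * poly q ((real_of_int j)^2))"
      using poly_moments[OF res degq] by simp
    also have "\<dots> = (\<Sum>j\<leftarrow>js. C0 * (if (real_of_int j)^2 = (real_of_int a)^2 then real_of_int j else 0))"
      using pt by (metis (no_types, lifting) map_cong)
    also have "\<dots> = C0 * (real_of_int a * (real (count (mset js) a) - real (count (mset js) (-a))))"
      by (simp add: sum_list_cmult sum_list_count[OF anz])
    finally have "real (count (mset js) a) - real (count (mset js) (-a)) = 0"
      using C0nz anz by simp
    then show ?thesis by simp
  qed
qed

theorem proposition3p2:
  fixes M :: nat and js :: "int list"
  assumes "M \<ge> 3"
    and "M_resonance M js"
  shows "even (length js) \<and> trivial_resonance js"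
proof -
  define ks where "ks = filter (\<lambda>j. j > 0) js"
  have nz: "\<forall>j\<in>set js. j \<noteq> 0" using assms(2) unfolding M_resonance_def by simp
  have cm: "count (mset js) a = count (mset js) (-a)" for a
    using counts_equal[OF assms(2)] .
  have mc: "mset (concat (map (\<lambda>k. [k, -k]) ks)) = mset ks + image_mset uminus (mset ks)"
    by (induction ks) auto
  have eq: "mset js = mset (concat (map (\<lambda>k. [k, -k]) ks))"
  proof (rule multiset_eqI)
    fix x :: int
    have c1: "count (image_mset uminus (mset ks)) x = count (mset ks) (-x)"
    proof -
      have v: "uminus -` {x} = {-x}" by auto
      show ?thesis unfolding count_image_mset v
        by (cases "-x \<in># mset ks") (auto simp: count_eq_zero_iff)
    qed
    have c2: "count (mset ks) y = (if y > 0 then count (mset js) y else 0)" for y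
      unfolding ks_def by simp
    have "0 \<notin> set js" using nz by blast
    then have c0: "count (mset js) 0 = 0" by (metis count_eq_zero_iff set_mset_mset)
    show "count (mset js) x = count (mset (concat (map (\<lambda>k. [k, -k]) ks))) x"
      unfolding mc count_union c1 c2 using cm[of x] c0
      by (cases "x > 0"; cases "x = 0") auto
  qed
  have "length js = size (mset js)" by simp
  also have "\<dots> = 2 * length ks" unfolding eq mc by simp
  finally have "even (length js)" by simp
  then show ?thesis using eq unfolding trivial_resonance_def by blast
qed

end
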